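(* Let $\lambda_{\max}\ge 1$ and let $F:[0,\lambda_{\max}]\to\mathbb{R}_+$ be continuously differentiable with $F(0)=0$. Let $$F^\star=\sup\Big\{\mathbb{E}_\alpha[F(X)] : \alpha \text{ a probability measure on }[0,\lambda_{\max}],\ X\sim\alpha,\ \mathbb{E}_\alpha[X]\le 1\Big\}.$$ Then for every stable control policy $\lambda:\mathbb{Z}_+\to[0,\lambda_{\max}]$, with stationary queue length $\bar q\sim\pi$, we have $\mathbb{E}_\pi[F(\lambda(\bar q))]\le F^\star$.
   Context: A control policy is a function $\lambda:\mathbb{Z}_+\to[0,\lambda_{\max}]$. It defines a continuous-time birth–death Markov chain (the queue length of a single-server queue with service rate $1$) on $\mathbb{Z}_+$ with transition rate $\lambda(q)$ from $q$ to $q+1$ and rate $1$ from $q$ to $q-1$ for $q\ge 1$. Let $\mathcal S$ be the set of states reachable from $0$ (i.e. $\mathcal S=\{0,1,\dots,q_0\}$ with $q_0$ the first $q\ge 1$ with $\lambda(q)=0$, or $\mathcal S=\mathbb{Z}_+$ if there is none). The policy is called stable if $\sum_{i\in\mathcal S}\prod_{q=0}^{i}\lambda(q)<\infty$, i.e. the chain restricted to $\mathcal S$ is positive recurrent; then $\pi$ denotes its unique stationary distribution on $\mathcal S$ and $\bar q$ a random variable with law $\pi$. *)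

theory Defs
  imports "HOL-Probability.Probability"
begin

definition is_policy :: "real \<Rightarrow> (nat \<Rightarrow> real) \<Rightarrow> bool" where
  "is_policy lmax lam \<longleftrightarrow> (\<forall>q. 0 \<le> lam q \<and> lam q \<le> lmax)"

definition reach_states :: "(nat \<Rightarrow> real) \<Rightarrow> nat set" where
  "reach_states lam = {i. \<forall>q<i. lam q > 0}"

definition stable_policy :: "(nat \<Rightarrow> real) \<Rightarrow> bool" where
  "stable_policy lam \<longleftrightarrow>
     summable (\<lambda>i. if i \<in> reach_states lam then (\<Prod>q\<in>{..i}. lam q) else 0)"

text \<open>pi is a stationary distribution of the birth-death chain (up rate lam q, down rate 1)
  restricted to the reachable states: a probability distribution supported on the reachable
  states satisfying the global balance equations there.\<close>
definition stationary_dist :: "(nat \<Rightarrow> real) \<Rightarrow> (nat \<Rightarrow> real) \<Rightarrow> bool" where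
  "stationary_dist lam p \<longleftrightarrow>
     (\<forall>i. 0 \<le> p i) \<and> p sums 1 \<and> (\<forall>i. i \<notin> reach_states lam \<longrightarrow> p i = 0) \<and>
     (\<forall>j \<in> reach_states lam.
        p j * (lam j + (if j \<ge> 1 then 1 else 0)) =
        (if j \<ge> 1 then p (j - 1) * lam (j - 1) else 0) + p (j + 1))"

definition Fstar :: "real \<Rightarrow> (real \<Rightarrow> real) \<Rightarrow> real" where
  "Fstar lmax F = Sup {(\<integral>x. F x \<partial>\<alpha>) | \<alpha>.
       prob_space \<alpha> \<and> sets \<alpha> = sets (restrict_space borel {0..lmax}) \<and>
       (\<integral>x. x \<partial>\<alpha>) \<le> 1}"

end

theory Submission
  imports Defs
begin

lemma flux:
  assumes "stationary_dist lam p"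
  shows "p i * lam i = p (Suc i)"
proof (induction i)
  case 0
  have "0 \<in> reach_states lam" by (simp add: reach_states_def)
  with assms have "p 0 * (lam 0 + 0) = 0 + p 1" unfolding stationary_dist_def by force
  then show ?case by simp
next
  case (Suc n)
  show ?case
  proof (cases "Suc n \<in> reach_states lam")
    case True
    with assms have "p (Suc n) * (lam (Suc n) + 1) = p n * lam n + p (Suc (Suc n))"
      by (auto simp add: stationary_dist_def)
    with Suc show ?thesis by (simp add: algebra_simps)
  next
    case False
    then have "Suc (Suc n) \<notin> reach_states lam" unfolding reach_states_def using less_SucI by blast
    with False assms show ?thesis by (simp add: stationary_dist_def)
  qed
qed

theorem proposition4p1:
  fixes lmax :: real and F :: "real \<Rightarrow> real" and lam :: "nat \<Rightarrow> real" and p :: "nat \<Rightarrow> real"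
  assumes "lmax \<ge> 1"
    and "\<exists>F'. continuous_on {0..lmax} F' \<and>
           (\<forall>x\<in>{0..lmax}. (F has_real_derivative F' x) (at x within {0..lmax}))"
    and "\<forall>x\<in>{0..lmax}. F x \<ge> 0"
    and "F 0 = 0"
    and "is_policy lmax lam"
    and "stable_policy lam"
    and "stationary_dist lam p"
  shows "(\<Sum>i. p i * F (lam i)) \<le> Fstar lmax F"
proof -
  have cont: "continuous_on {0..lmax} F"
    using assms(2) continuous_on_eq_continuous_within DERIV_continuous
    by blast
  have "bounded (F ` {0..lmax})"
    by (intro compact_imp_bounded compact_continuous_image cont) auto
  then obtain B where B: "\<And>x. x \<in> {0..lmax} \<Longrightarrow> \<bar>F x\<bar> \<le> B"
    unfolding bounded_iff by (metis atLeastAtMost_iff image_eqI real_norm_def)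
  have B0: "0 \<le> B" using B[of 0] assms(1) by auto
  have p0: "\<And>i. 0 \<le> p i" and ps: "p sums 1"
    using assms(7) by (auto simp: stationary_dist_def)
  have lamr: "\<And>i. lam i \<in> {0..lmax}" using assms(5) by (auto simp: is_policy_def)
  define R where "R = restrict_space (borel :: real measure) {0..lmax}"
  define M where "M = density (count_space (UNIV::nat set)) (\<lambda>i. ennreal (p i))"
  define \<alpha> where "\<alpha> = distr M R lam"
  have Fm: "F \<in> borel_measurable R" unfolding R_def
    by (rule borel_measurable_continuous_on_restrict[OF cont])
  have idm: "(\<lambda>x. x) \<in> borel_measurable R" unfolding R_def
    by (rule borel_measurable_continuous_on_restrict) (rule continuous_on_id)
  have lamm: "lam \<in> measurable M R"
    using lamr by (simp add: M_def R_def space_restrict_space)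
  have "emeasure M (space M) = 1"
  proof -
    have "emeasure M (space M) = (\<integral>\<^sup>+i. ennreal (p i) \<partial>count_space UNIV)"
      by (simp add: M_def emeasure_density)
    also have "\<dots> = (\<Sum>i. ennreal (p i))" by (rule nn_integral_count_space_nat)
    also have "\<dots> = ennreal 1"
      using ps p0 by (metis sums_unique suminf_ennreal2 sums_summable)
    finally show ?thesis by simp
  qed
  then have psM: "prob_space M" by (intro prob_spaceI)
  have prob: "prob_space \<alpha>" unfolding \<alpha>_def
    by (rule prob_space.prob_space_distr[OF psM lamm])
  have sets: "sets \<alpha> = sets (restrict_space borel {0..lmax})"
    by (simp add: \<alpha>_def R_def)
  have intg: "integral\<^sup>L \<alpha> g = (\<Sum>i. p i * g (lam i))"
    if gm: "g \<in> borel_measurable R" and gb: "\<And>i. \<bar>g (lam i)\<bar> \<le> C" for g C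
  proof -
    have "integral\<^sup>L \<alpha> g = integral\<^sup>L M (\<lambda>i. g (lam i))"
      unfolding \<alpha>_def by (rule integral_distr[OF lamm gm])
    also have "\<dots> = integral\<^sup>L (count_space UNIV) (\<lambda>i. p i * g (lam i))"
      unfolding M_def by (subst integral_density) (auto simp: p0)
    also have "\<dots> = (\<Sum>i. p i * g (lam i))"
    proof -
      have "summable (\<lambda>i. C * p i)" using ps by (intro summable_mult sums_summable) auto
      then have "summable (\<lambda>i. norm (p i * g (lam i)))"
        by (rule summable_comparison_test'[where N=0])
           (auto simp: abs_mult p0 intro!: mult_left_mono[OF gb, of "p _", simplified mult.commute] )
      then have "integrable (count_space UNIV) (\<lambda>i. p i * g (lam i))"
        by (simp add: integrable_count_space_nat_iff)
      from sums_integral_count_space_nat[OF this] show ?thesis by (simp add: sums_unique)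
    qed
    finally show ?thesis .
  qed
  have EF: "integral\<^sup>L \<alpha> F = (\<Sum>i. p i * F (lam i))"
    by (rule intg[OF Fm, of B]) (use B lamr in auto)
  have EX: "integral\<^sup>L \<alpha> (\<lambda>x. x) = (\<Sum>i. p i * lam i)"
    by (rule intg[OF idm, of lmax]) (use lamr in auto)
  have "(\<lambda>i. p i * lam i) sums (1 - p 0)"
    using ps flux[OF assms(7)] by (simp add: sums_Suc_iff)
  then have EX1: "integral\<^sup>L \<alpha> (\<lambda>x. x) \<le> 1" using EX p0[of 0] sums_unique by fastforce
  let ?S = "{(\<integral>x. F x \<partial>\<alpha>) | \<alpha>.
       prob_space \<alpha> \<and> sets \<alpha> = sets (restrict_space borel {0..lmax}) \<and>
       (\<integral>x. x \<partial>\<alpha>) \<le> 1}"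
  have bdd: "bdd_above ?S"
  proof (rule bdd_aboveI, safe)
    fix \<beta> :: "real measure"
    assume pb: "prob_space \<beta>" and sb: "sets \<beta> = sets (restrict_space borel {0..lmax})"
    have spb: "space \<beta> = {0..lmax}"
      using sets_eq_imp_space_eq[OF sb] by (simp add: space_restrict_space)
    show "integral\<^sup>L \<beta> F \<le> B"
    proof (cases "integrable \<beta> F")
      case True
      have "integral\<^sup>L \<beta> F \<le> integral\<^sup>L \<beta> (\<lambda>_. B)"
      proof (rule integral_mono[OF True])
        show "integrable \<beta> (\<lambda>_. B)"
          using pb by (simp add: finite_measure.integrable_const prob_space.finite_measure)
        fix x assume "x \<in> space \<beta>" then show "F x \<le> B" using B spb by (auto simp: abs_le_iff)
      qed
      also have "\<dots> = B" using pb by (simp add: prob_space.prob_space)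
      finally show ?thesis .
    next
      case False then show ?thesis by (simp add: not_integrable_integral_eq B0)
    qed
  qed
  have "integral\<^sup>L \<alpha> F \<in> ?S" using prob sets EX1 by blast
  from cSup_upper[OF this bdd] EF show ?thesis by (simp add: Fstar_def)
qed

end
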